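(* Let $G=(V,E)$ be a digraph of directed tree-width at most $k$, and let $V_1,V_2$ satisfy $V_1\cup V_2=V$, $V_1\cap V_2=\emptyset$ and $\{(u,v),(v,u):u\in V_1,v\in V_2\}\subseteq E$. Then there is a directed tree-decomposition $(T,\mathcal{X},\mathcal{W})$, $T=(V_T,E_T)$, of $G$ of width at most $k$ such that $V_1\subseteq X_e$ for every $e\in E_T$, or $V_2\subseteq X_e$ for every $e\in E_T$.
   Context: Digraphs are finite, without loops or multiple arcs. An out-tree is a digraph whose underlying graph is a tree, with a root such that all arcs are directed away from it; $u\le v$ means there is a directed path with $\ge0$ arcs from $u$ to $v$. For $Z\subseteq V$, a set $S\subseteq V$ is $Z$-normal if there is no directed walk in $G-Z$ with first and last vertices in $S$ that uses a vertex of $G-(Z\cup S)$. A directed tree-decomposition of $G=(V,E)$ is a triple $(T,\mathcal{X},\mathcal{W})$ with $T=(V_T,E_T)$ an out-tree, $\mathcal{X}=\{X_e:e\in E_T\}$ and $\mathcal{W}=\{W_r:r\in V_T\}$ subsets of $V$, such that $\mathcal{W}$ is a partition of $V$ into nonempty sets and for every $(u,v)\in E_T$ the set $\bigcup\{W_r: r\in V_T, v\le r\}$ is $X_{(u,v)}$-normal. Its width is $\max_{r\in V_T}|W_r\cup\bigcup_{e\sim r}X_e|-1$ ($e\sim r$: $r$ is an end vertex of $e$); the directed tree-width is the minimum width. *)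

theory Defs
  imports Main
begin

definition digraph :: "'a set \<Rightarrow> ('a \<times> 'a) set \<Rightarrow> bool" where
  "digraph V E \<longleftrightarrow> finite V \<and> E \<subseteq> V \<times> V \<and> (\<forall>v. (v, v) \<notin> E)"

text \<open>Out-tree: a digraph whose underlying (undirected) graph is a tree, i.e.
  connected and minimally connected, with no pair of opposite arcs (which would
  form a double edge in the underlying graph), and with a root from which all
  arcs are directed away (every vertex is reachable from the root by a directed path).\<close>
definition ugraph_connected :: "'b set \<Rightarrow> ('b \<times> 'b) set \<Rightarrow> bool" where
  "ugraph_connected VT ET \<longleftrightarrow> (\<forall>u\<in>VT. \<forall>v\<in>VT. (u, v) \<in> (ET \<union> ET\<inverse>)\<^sup>*)"

definition out_tree :: "'b set \<Rightarrow> ('b \<times> 'b) set \<Rightarrow> bool" where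
  "out_tree VT ET \<longleftrightarrow> digraph VT ET \<and> VT \<noteq> {}
     \<and> (\<forall>u v. (u, v) \<in> ET \<longrightarrow> (v, u) \<notin> ET)
     \<and> ugraph_connected VT ET
     \<and> (\<forall>e\<in>ET. \<not> ugraph_connected VT (ET - {e}))
     \<and> (\<exists>r\<in>VT. \<forall>v\<in>VT. (r, v) \<in> ET\<^sup>*)"

definition is_walk :: "('a \<times> 'a) set \<Rightarrow> 'a list \<Rightarrow> bool" where
  "is_walk E ws \<longleftrightarrow> ws \<noteq> [] \<and> (\<forall>i. Suc i < length ws \<longrightarrow> (ws ! i, ws ! Suc i) \<in> E)"

definition z_normal :: "'a set \<Rightarrow> ('a \<times> 'a) set \<Rightarrow> 'a set \<Rightarrow> 'a set \<Rightarrow> bool" where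
  "z_normal V E Z S \<longleftrightarrow>
     \<not> (\<exists>ws. is_walk E ws \<and> set ws \<subseteq> V - Z \<and> hd ws \<in> S \<and> last ws \<in> S
            \<and> (\<exists>w\<in>set ws. w \<notin> S))"

definition dir_tree_decomp ::
  "'a set \<Rightarrow> ('a \<times> 'a) set \<Rightarrow> nat set \<Rightarrow> (nat \<times> nat) set
     \<Rightarrow> (nat \<times> nat \<Rightarrow> 'a set) \<Rightarrow> (nat \<Rightarrow> 'a set) \<Rightarrow> bool" where
  "dir_tree_decomp V E VT ET X W \<longleftrightarrow>
     out_tree VT ET
     \<and> (\<forall>e\<in>ET. X e \<subseteq> V)
     \<and> (\<forall>r\<in>VT. W r \<noteq> {} \<and> W r \<subseteq> V)
     \<and> (\<forall>r\<in>VT. \<forall>s\<in>VT. r \<noteq> s \<longrightarrow> W r \<inter> W s = {})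
     \<and> (\<Union>r\<in>VT. W r) = V
     \<and> (\<forall>(u, v)\<in>ET. z_normal V E (X (u, v)) (\<Union>{W r | r. r \<in> VT \<and> (v, r) \<in> ET\<^sup>*}))"

definition dtd_width ::
  "nat set \<Rightarrow> (nat \<times> nat) set \<Rightarrow> (nat \<times> nat \<Rightarrow> 'a set) \<Rightarrow> (nat \<Rightarrow> 'a set) \<Rightarrow> nat" where
  "dtd_width VT ET X W =
     Max {card (W r \<union> \<Union>{X e | e. e \<in> ET \<and> (fst e = r \<or> snd e = r)}) | r. r \<in> VT} - 1"

definition directed_tree_width :: "'a set \<Rightarrow> ('a \<times> 'a) set \<Rightarrow> nat" where
  "directed_tree_width V E =
     (LEAST w. \<exists>VT ET X W. dir_tree_decomp V E VT ET X W \<and> dtd_width VT ET X W = w)"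

end

theory Submission
  imports Defs
begin

lemma avoid_edge:
  assumes "(x, y) \<in> R\<^sup>*"
  shows "(x, y) \<in> (R - {(a, b)})\<^sup>* \<or> (b, y) \<in> (R - {(a, b)})\<^sup>*"
  using assms
proof (induction rule: rtrancl_induct)
  case base then show ?case by simp
next
  case (step y z)
  show ?case
  proof (cases "(y, z) = (a, b)")
    case True then show ?thesis by auto
  next
    case False
    then have "(y, z) \<in> R - {(a, b)}" using step by auto
    then show ?thesis using step.IH by (meson rtrancl.rtrancl_into_rtrancl)
  qed
qed

lemma out_tree_sub: "out_tree VT ET \<Longrightarrow> ET \<subseteq> VT \<times> VT"
  by (simp add: out_tree_def digraph_def)

lemma remove_conn:
  assumes ot: "out_tree VT ET" and e: "(a, b) \<in> ET"
    and c: "(a, b) \<in> ((ET - {(a, b)}) \<union> (ET - {(a, b)})\<inverse>)\<^sup>*"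
  shows False
proof -
  let ?R = "ET - {(a, b)}"
  have "ET \<union> ET\<inverse> \<subseteq> (?R \<union> ?R\<inverse>)\<^sup>*"
  proof
    fix p assume p: "p \<in> ET \<union> ET\<inverse>"
    show "p \<in> (?R \<union> ?R\<inverse>)\<^sup>*"
    proof (cases "p = (a, b) \<or> p = (b, a)")
      case True
      moreover have "(b, a) \<in> (?R \<union> ?R\<inverse>)\<^sup>*"
        using c by (metis converse_Un converse_converse rtrancl_converseI sup_commute)
      ultimately show ?thesis using c by auto
    next
      case False then show ?thesis using p by auto
    qed
  qed
  then have "(ET \<union> ET\<inverse>)\<^sup>* \<subseteq> (?R \<union> ?R\<inverse>)\<^sup>*" by (rule rtrancl_subset_rtrancl)
  then have "ugraph_connected VT ?R"
    using ot unfolding out_tree_def ugraph_connected_def by blast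
  then show False using ot e unfolding out_tree_def by blast
qed

lemma acyc:
  assumes ot: "out_tree VT ET" and e: "(a, b) \<in> ET" and p: "(b, a) \<in> ET\<^sup>*"
  shows False
proof -
  let ?R = "ET - {(a, b)}"
  have "(b, a) \<in> ?R\<^sup>*" using avoid_edge[OF p, of a b] by auto
  then have "(a, b) \<in> (?R\<inverse>)\<^sup>*" by (simp add: rtrancl_converseI)
  then have "(a, b) \<in> (?R \<union> ?R\<inverse>)\<^sup>*" by (meson in_rtrancl_UnI)
  then show False using remove_conn[OF ot e] by simp
qed

lemma get_root: "out_tree VT ET \<Longrightarrow> \<exists>r\<in>VT. \<forall>v\<in>VT. (r, v) \<in> ET\<^sup>*"
  by (simp add: out_tree_def)

lemma uniq_parent:
  assumes ot: "out_tree VT ET" and e1: "(y, z) \<in> ET" and e2: "(y', z) \<in> ET"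
  shows "y = y'"
proof (rule ccontr)
  assume ne: "y \<noteq> y'"
  let ?R = "ET - {(y, z)}"
  let ?U = "(?R \<union> ?R\<inverse>)\<^sup>*"
  obtain \<rho> where rho: "\<rho> \<in> VT" "\<forall>v\<in>VT. (\<rho>, v) \<in> ET\<^sup>*" using get_root[OF ot] by blast
  have yV: "y \<in> VT" "y' \<in> VT" using e1 e2 out_tree_sub[OF ot] by auto
  have r1: "(\<rho>, y) \<in> ?R\<^sup>* \<or> (z, y) \<in> ?R\<^sup>*" using avoid_edge rho yV by metis
  have r2: "(\<rho>, y') \<in> ?R\<^sup>* \<or> (z, y') \<in> ?R\<^sup>*" using avoid_edge rho yV by metis
  have "(z, y') \<notin> ?R\<^sup>*"
  proof
    assume "(z, y') \<in> ?R\<^sup>*"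
    then have "(z, y') \<in> ET\<^sup>*" by (meson Diff_subset rtrancl_mono subsetD)
    then show False using acyc[OF ot e2] by blast
  qed
  with r2 have r2': "(\<rho>, y') \<in> ?R\<^sup>*" by blast
  have sub1: "\<And>p q. (p, q) \<in> ?R\<^sup>* \<Longrightarrow> (p, q) \<in> ?U" by (meson in_rtrancl_UnI)
  have sub2: "\<And>p q. (p, q) \<in> ?R\<^sup>* \<Longrightarrow> (q, p) \<in> ?U"
    by (metis in_rtrancl_UnI rtrancl_converseI)
  have ez: "(y', z) \<in> ?U" using e2 ne by auto
  have "(y, z) \<in> ?U"
  proof (cases "(z, y) \<in> ?R\<^sup>*")
    case True then show ?thesis using sub2 by blast
  next
    case False
    with r1 have "(\<rho>, y) \<in> ?R\<^sup>*" by blast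
    then have "(y, \<rho>) \<in> ?U" using sub2 by blast
    moreover have "(\<rho>, y') \<in> ?U" using sub1 r2' by blast
    ultimately show ?thesis using ez by (meson rtrancl_trans)
  qed
  then show False using remove_conn[OF ot e1] by simp
qed

lemma antisym_tree:
  assumes ot: "out_tree VT ET" and p: "(a, b) \<in> ET\<^sup>*" and q: "(b, a) \<in> ET\<^sup>*"
  shows "a = b"
proof (rule ccontr)
  assume "a \<noteq> b"
  then have "(a, b) \<in> ET\<^sup>+" using p by (metis rtrancl_eq_or_trancl)
  then obtain c where c: "(a, c) \<in> ET\<^sup>*" "(c, b) \<in> ET" by (meson tranclD2)
  have "(b, c) \<in> ET\<^sup>*" using q c by (meson rtrancl_trans)
  then show False using acyc[OF ot c(2)] by blast
qed

lemma sub_minimal: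
  assumes ot: "out_tree VT ET" and sub: "ET' \<subseteq> ET" and sub2: "ET' \<subseteq> VT' \<times> VT'"
  shows "\<forall>g\<in>ET'. \<not> ugraph_connected VT' (ET' - {g})"
proof (intro ballI notI)
  fix g assume g: "g \<in> ET'" and c: "ugraph_connected VT' (ET' - {g})"
  obtain a b where gab: "g = (a, b)" by (cases g)
  have ab: "a \<in> VT'" "b \<in> VT'" using g gab sub2 by auto
  have "(a, b) \<in> ((ET' - {g}) \<union> (ET' - {g})\<inverse>)\<^sup>*" using c ab unfolding ugraph_connected_def by blast
  moreover have "((ET' - {g}) \<union> (ET' - {g})\<inverse>) \<subseteq> ((ET - {(a,b)}) \<union> (ET - {(a,b)})\<inverse>)"
    using sub gab by auto
  ultimately have "(a, b) \<in> ((ET - {(a,b)}) \<union> (ET - {(a,b)})\<inverse>)\<^sup>*"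
    using rtrancl_mono by blast
  then show False using remove_conn[OF ot] g sub gab by blast
qed

lemma conn_from_root:
  assumes "\<forall>x\<in>A. (r, x) \<in> R\<^sup>*"
  shows "ugraph_connected A R"
  unfolding ugraph_connected_def
proof (intro ballI)
  fix a b assume "a \<in> A" "b \<in> A"
  then have "(r, a) \<in> R\<^sup>*" "(r, b) \<in> R\<^sup>*" using assms by auto
  then have "(a, r) \<in> (R \<union> R\<inverse>)\<^sup>*" "(r, b) \<in> (R \<union> R\<inverse>)\<^sup>*"
    by (metis in_rtrancl_UnI rtrancl_converseI)+
  then show "(a, b) \<in> (R \<union> R\<inverse>)\<^sup>*" by (meson rtrancl_trans)
qed

lemma stay_down:
  assumes "(x, y) \<in> ET\<^sup>*" and "(v, x) \<in> ET\<^sup>*" and "x \<in> VT" and "ET \<subseteq> VT \<times> VT"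
  shows "(x, y) \<in> (ET \<inter> ({r\<in>VT. (v, r) \<in> ET\<^sup>*} \<times> {r\<in>VT. (v, r) \<in> ET\<^sup>*}))\<^sup>* \<and> (v, y) \<in> ET\<^sup>* \<and> y \<in> VT"
  using assms(1)
proof (induction rule: rtrancl_induct)
  case base then show ?case using assms by auto
next
  case (step y z)
  then have "(y, z) \<in> ET \<inter> ({r\<in>VT. (v, r) \<in> ET\<^sup>*} \<times> {r\<in>VT. (v, r) \<in> ET\<^sup>*})"
    using assms(4) by (auto intro: rtrancl_into_rtrancl)
  then show ?case using step by (auto intro: rtrancl_into_rtrancl)
qed

lemma stay_up:
  assumes "(x, y) \<in> ET\<^sup>*" and "y \<in> VT - {r\<in>VT. (v, r) \<in> ET\<^sup>*}" and "x \<in> VT" and "ET \<subseteq> VT \<times> VT"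
  shows "(x, y) \<in> (ET \<inter> ((VT - {r\<in>VT. (v, r) \<in> ET\<^sup>*}) \<times> (VT - {r\<in>VT. (v, r) \<in> ET\<^sup>*})))\<^sup>*"
  using assms(1,2)
proof (induction rule: rtrancl_induct)
  case base then show ?case by auto
next
  case (step y z)
  have "y \<in> VT" using step(2) assms(4) by auto
  moreover have "(v, y) \<notin> ET\<^sup>*" using step by (auto intro: rtrancl_into_rtrancl)
  ultimately have "y \<in> VT - {r\<in>VT. (v, r) \<in> ET\<^sup>*}" by auto
  then show ?case using step by (auto intro: rtrancl_into_rtrancl)
qed

lemma down_tree:
  assumes ot: "out_tree VT ET" and v: "v \<in> VT"
  shows "out_tree {r\<in>VT. (v, r) \<in> ET\<^sup>*} (ET \<inter> ({r\<in>VT. (v, r) \<in> ET\<^sup>*} \<times> {r\<in>VT. (v, r) \<in> ET\<^sup>*}))"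
    (is "out_tree ?D ?E")
proof -
  have sub: "ET \<subseteq> VT \<times> VT" using out_tree_sub[OF ot] .
  have root: "\<forall>x\<in>?D. (v, x) \<in> ?E\<^sup>*" using stay_down[of v _ ET v VT] v sub by auto
  show ?thesis unfolding out_tree_def
  proof (intro conjI)
    show "digraph ?D ?E" using ot unfolding out_tree_def digraph_def by auto
    show "?D \<noteq> {}" using v by auto
    show "\<forall>a b. (a, b) \<in> ?E \<longrightarrow> (b, a) \<notin> ?E" using ot unfolding out_tree_def by auto
    show "ugraph_connected ?D ?E" using conn_from_root[OF root] .
    show "\<forall>e\<in>?E. \<not> ugraph_connected ?D (?E - {e})" using sub_minimal[OF ot] by blast
    show "\<exists>r\<in>?D. \<forall>x\<in>?D. (r, x) \<in> ?E\<^sup>*" using root v by auto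
  qed
qed

lemma up_tree:
  assumes ot: "out_tree VT ET" and e: "(u, v) \<in> ET"
  shows "out_tree (VT - {r\<in>VT. (v, r) \<in> ET\<^sup>*}) (ET \<inter> ((VT - {r\<in>VT. (v, r) \<in> ET\<^sup>*}) \<times> (VT - {r\<in>VT. (v, r) \<in> ET\<^sup>*})))"
    (is "out_tree ?D ?E")
proof -
  have sub: "ET \<subseteq> VT \<times> VT" using out_tree_sub[OF ot] .
  obtain \<rho> where rho: "\<rho> \<in> VT" "\<forall>x\<in>VT. (\<rho>, x) \<in> ET\<^sup>*" using get_root[OF ot] by blast
  have uV: "u \<in> VT" using e sub by auto
  have "(v, \<rho>) \<notin> ET\<^sup>*"
  proof
    assume "(v, \<rho>) \<in> ET\<^sup>*"
    then have "(v, u) \<in> ET\<^sup>*" using rho uV by (meson rtrancl_trans)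
    then show False using acyc[OF ot e] by blast
  qed
  then have rhoD: "\<rho> \<in> ?D" using rho by auto
  have root: "\<forall>x\<in>?D. (\<rho>, x) \<in> ?E\<^sup>*" using stay_up[of \<rho> _ ET VT v] rho sub by auto
  show ?thesis unfolding out_tree_def
  proof (intro conjI)
    show "digraph ?D ?E" using ot unfolding out_tree_def digraph_def by auto
    show "?D \<noteq> {}" using rhoD by auto
    show "\<forall>a b. (a, b) \<in> ?E \<longrightarrow> (b, a) \<notin> ?E" using ot unfolding out_tree_def by auto
    show "ugraph_connected ?D ?E" using conn_from_root[OF root] .
    show "\<forall>e\<in>?E. \<not> ugraph_connected ?D (?E - {e})" using sub_minimal[OF ot] by blast
    show "\<exists>r\<in>?D. \<forall>x\<in>?D. (r, x) \<in> ?E\<^sup>*" using root rhoD by auto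
  qed
qed

lemma entry:
  assumes ot: "out_tree VT ET" and e: "(u, v) \<in> ET"
    and p: "(b, r) \<in> ET\<^sup>*" and bD: "(v, b) \<notin> ET\<^sup>*" and rD: "(v, r) \<in> ET\<^sup>*"
  shows "(b, u) \<in> ET\<^sup>*"
  using p rD
proof (induction rule: rtrancl_induct)
  case base then show ?case using bD by simp
next
  case (step y z)
  show ?case
  proof (cases "(v, y) \<in> ET\<^sup>*")
    case True then show ?thesis using step by blast
  next
    case False
    show ?thesis
    proof (cases "z = v")
      case True
      then have "y = u" using uniq_parent[OF ot step(2)] e by blast
      then show ?thesis using step by blast
    next
      case zne: False
      then have "(v, z) \<in> ET\<^sup>+" using step(4) by (metis rtrancl_eq_or_trancl)
      then obtain p where p: "(v, p) \<in> ET\<^sup>*" "(p, z) \<in> ET" by (meson tranclD2)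
      then have "p = y" using uniq_parent[OF ot p(2) step(2)] by blast
      then show ?thesis using p False by blast
    qed
  qed
qed

definition bag :: "(nat \<times> nat) set \<Rightarrow> (nat \<times> nat \<Rightarrow> 'a set) \<Rightarrow> (nat \<Rightarrow> 'a set) \<Rightarrow> nat \<Rightarrow> 'a set" where
  "bag ET X W r = W r \<union> \<Union>{X e | e. e \<in> ET \<and> (fst e = r \<or> snd e = r)}"

lemma width_bag: "dtd_width VT ET X W = Max {card (bag ET X W r) | r. r \<in> VT} - 1"
  by (simp add: dtd_width_def bag_def)

lemma bag_sub: "dir_tree_decomp V E VT ET X W \<Longrightarrow> r \<in> VT \<Longrightarrow> bag ET X W r \<subseteq> V"
  unfolding bag_def dir_tree_decomp_def by blast

lemma dtd_finite: "dir_tree_decomp V E VT ET X W \<Longrightarrow> finite VT"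
  unfolding dir_tree_decomp_def out_tree_def digraph_def by blast

lemma dtd_ne: "dir_tree_decomp V E VT ET X W \<Longrightarrow> VT \<noteq> {}"
  unfolding dir_tree_decomp_def out_tree_def by blast

lemma width_mono:
  assumes "finite VT" "finite VT'" "VT' \<noteq> {}"
    and "\<forall>r'\<in>VT'. \<exists>r\<in>VT. card (bag ET' X' W' r') \<le> card (bag ET X W r)"
  shows "dtd_width VT' ET' X' W' \<le> dtd_width VT ET X W"
proof -
  let ?A = "{card (bag ET' X' W' r) | r. r \<in> VT'}"
  let ?B = "{card (bag ET X W r) | r. r \<in> VT}"
  have fA: "finite ?A" "?A \<noteq> {}" using assms by auto
  have fB: "finite ?B" using assms by auto
  have "Max ?A \<in> ?A" using fA by (rule Max_in)
  then obtain r' where r': "r' \<in> VT'" "Max ?A = card (bag ET' X' W' r')" by auto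
  then obtain r where r: "r \<in> VT" "card (bag ET' X' W' r') \<le> card (bag ET X W r)" using assms by blast
  have "card (bag ET X W r) \<le> Max ?B" using fB r by (auto intro: Max_ge)
  then have "Max ?A \<le> Max ?B" using r r' by linarith
  then show ?thesis unfolding width_bag by linarith
qed

lemma width_ge:
  assumes "dir_tree_decomp V E VT ET X W" "r \<in> VT" "V \<subseteq> bag ET X W r" "finite V"
  shows "card V - 1 \<le> dtd_width VT ET X W"
proof -
  let ?B = "{card (bag ET X W r) | r. r \<in> VT}"
  have fB: "finite ?B" using dtd_finite[OF assms(1)] by auto
  have "card V \<le> card (bag ET X W r)" using assms bag_sub by (metis card_mono finite_subset)
  also have "\<dots> \<le> Max ?B" using fB assms(2) by (auto intro: Max_ge)
  finally show ?thesis unfolding width_bag by linarith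
qed

lemma trivial_dtd:
  assumes "digraph V E" "V \<noteq> {}"
  shows "dir_tree_decomp V E {0} {} (\<lambda>_. {}) (\<lambda>_. V) \<and> dtd_width {0} {} (\<lambda>_. {}) (\<lambda>_. V) = card V - 1"
proof
  have "out_tree {0::nat} {}"
    unfolding out_tree_def digraph_def ugraph_connected_def by auto
  then show "dir_tree_decomp V E {0} {} (\<lambda>_. {}) (\<lambda>_. V)"
    unfolding dir_tree_decomp_def using assms by auto
  show "dtd_width {0} {} (\<lambda>_. {}) (\<lambda>_. V) = card V - 1"
    unfolding dtd_width_def by simp
qed

lemma path_arg:
  assumes ot: "out_tree VT ET"
    and cov: "\<forall>e\<in>ET. P e \<or> Q e"
    and nc: "\<forall>r g h. g \<in> ET \<longrightarrow> h \<in> ET \<longrightarrow> (fst g = r \<or> snd g = r) \<longrightarrow> (fst h = r \<or> snd h = r) \<longrightarrow> \<not> (P g \<and> Q h)"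
  shows "(\<forall>e\<in>ET. P e) \<or> (\<forall>e\<in>ET. Q e)"
proof (rule ccontr)
  assume "\<not> ?thesis"
  then obtain e f where e: "e \<in> ET" "\<not> P e" and f: "f \<in> ET" "\<not> Q f" by blast
  obtain a b where eab: "e = (a, b)" by (cases e)
  obtain c d where fcd: "f = (c, d)" by (cases f)
  have sub: "ET \<subseteq> VT \<times> VT" using out_tree_sub[OF ot] .
  have bc: "(b, c) \<in> (ET \<union> ET\<inverse>)\<^sup>*" using ot e f eab fcd sub
    unfolding out_tree_def ugraph_connected_def by blast
  let ?Q' = "\<lambda>x. \<forall>g\<in>ET. (fst g = x \<or> snd g = x) \<longrightarrow> \<not> P g"
  have "?Q' b" using nc e cov eab by fastforce
  then have "?Q' c" using bc
  proof (induction rule: rtrancl_induct[OF bc])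
    case 1 then show ?case by simp
  next
    case (2 y z)
    then have Qy: "?Q' y" by blast
    from 2 obtain g where g: "g \<in> ET" "(g = (y, z) \<or> g = (z, y))" by auto
    then have "\<not> P g" using Qy by auto
    then have "Q g" using cov g by blast
    then show ?case using nc g by fastforce
  qed
  then show False using f fcd cov by fastforce
qed

lemma bag_mono:
  assumes "W' r \<subseteq> W r \<union> \<Union>{X e | e. e \<in> ET \<and> (fst e = r \<or> snd e = r)}" "ET' \<subseteq> ET"
  shows "bag ET' X W' r \<subseteq> bag ET X W r"
proof -
  have h: "\<Union>{X e | e. e \<in> ET' \<and> (fst e = r \<or> snd e = r)} \<subseteq> \<Union>{X e | e. e \<in> ET \<and> (fst e = r \<or> snd e = r)}"
    using assms(2) by blast
  have gen: "\<And>A B C D. A \<subseteq> B \<union> D \<Longrightarrow> C \<subseteq> D \<Longrightarrow> A \<union> C \<subseteq> B \<union> D" by blast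
  show ?thesis unfolding bag_def by (rule gen[OF assms(1) h])
qed

lemma contract_down:
  assumes d: "dir_tree_decomp V E VT ET X W" and e: "(u, v) \<in> ET"
    and SX: "\<Union>{W r | r. r \<in> VT \<and> (v, r) \<in> ET\<^sup>*} \<subseteq> X (u, v)" and fin: "finite V"
  shows "\<exists>VT' ET' W'. dir_tree_decomp V E VT' ET' X W' \<and> card VT' < card VT
           \<and> dtd_width VT' ET' X W' \<le> dtd_width VT ET X W"
proof -
  define D where "D = {r\<in>VT. (v, r) \<in> ET\<^sup>*}"
  define U where "U = VT - D"
  define ET' where "ET' = ET \<inter> (U \<times> U)"
  define S where "S = \<Union>{W r | r. r \<in> VT \<and> (v, r) \<in> ET\<^sup>*}"
  define W' where "W' = W(u := W u \<union> S)"
  have ot: "out_tree VT ET" using d unfolding dir_tree_decomp_def by blast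
  have sub: "ET \<subseteq> VT \<times> VT" using out_tree_sub[OF ot] .
  have uV: "u \<in> VT" and vV: "v \<in> VT" using e sub by auto
  have uU: "u \<in> U" unfolding U_def D_def using uV acyc[OF ot e] by blast
  have vD: "v \<in> D" unfolding D_def using vV by blast
  have fVT: "finite VT" using dtd_finite[OF d] .
  have ETsub: "ET' \<subseteq> ET" unfolding ET'_def by blast
  have ot': "out_tree U ET'" unfolding U_def ET'_def D_def using up_tree[OF ot e] .
  have Wp: "\<forall>r\<in>VT. W r \<noteq> {} \<and> W r \<subseteq> V" "\<forall>r\<in>VT. \<forall>s\<in>VT. r \<noteq> s \<longrightarrow> W r \<inter> W s = {}"
    "(\<Union>r\<in>VT. W r) = V" "\<forall>e\<in>ET. X e \<subseteq> V"
    using d unfolding dir_tree_decomp_def by blast+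
  have Sdef: "S = (\<Union>r\<in>D. W r)" unfolding S_def D_def by blast
  have SV: "S \<subseteq> V" using Wp(1) unfolding Sdef D_def by blast
  have nrm: "\<forall>(a, b)\<in>ET. z_normal V E (X (a, b)) (\<Union>{W r | r. r \<in> VT \<and> (b, r) \<in> ET\<^sup>*})"
    using d unfolding dir_tree_decomp_def by blast
  have Seq: "\<Union>{W' r | r. r \<in> U \<and> (b, r) \<in> ET'\<^sup>*} = \<Union>{W r | r. r \<in> VT \<and> (b, r) \<in> ET\<^sup>*}"
    if ab: "(a, b) \<in> ET'" for a b
  proof
    have bU: "b \<in> U" using ab unfolding ET'_def by blast
    have mono': "ET'\<^sup>* \<subseteq> ET\<^sup>*" unfolding ET'_def by (simp add: rtrancl_mono)
    show "\<Union>{W' r | r. r \<in> U \<and> (b, r) \<in> ET'\<^sup>*} \<subseteq> \<Union>{W r | r. r \<in> VT \<and> (b, r) \<in> ET\<^sup>*}"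
    proof
      fix x assume "x \<in> \<Union>{W' r | r. r \<in> U \<and> (b, r) \<in> ET'\<^sup>*}"
      then obtain r where r: "r \<in> U" "(b, r) \<in> ET'\<^sup>*" "x \<in> W' r" by blast
      have br: "(b, r) \<in> ET\<^sup>*" using r mono' by blast
      show "x \<in> \<Union>{W r | r. r \<in> VT \<and> (b, r) \<in> ET\<^sup>*}"
      proof (cases "r = u \<and> x \<in> S")
        case True
        then obtain d where dd: "d \<in> VT" "(v, d) \<in> ET\<^sup>*" "x \<in> W d" unfolding S_def by blast
        have "(b, d) \<in> ET\<^sup>*" using br True e dd(2)
          by (meson converse_rtrancl_into_rtrancl rtrancl_trans)
        then show ?thesis using dd by blast
      next
        case False
        then have "x \<in> W r" using r unfolding W'_def by (auto split: if_splits)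
        then show ?thesis using br r U_def by blast
      qed
    qed
    show "\<Union>{W r | r. r \<in> VT \<and> (b, r) \<in> ET\<^sup>*} \<subseteq> \<Union>{W' r | r. r \<in> U \<and> (b, r) \<in> ET'\<^sup>*}"
    proof
      fix x assume "x \<in> \<Union>{W r | r. r \<in> VT \<and> (b, r) \<in> ET\<^sup>*}"
      then obtain r where r: "r \<in> VT" "(b, r) \<in> ET\<^sup>*" "x \<in> W r" by blast
      have bVT: "b \<in> VT" using bU U_def by blast
      show "x \<in> \<Union>{W' r | r. r \<in> U \<and> (b, r) \<in> ET'\<^sup>*}"
      proof (cases "r \<in> D")
        case True
        have bu: "(b, u) \<in> ET\<^sup>*" using entry[OF ot e r(2)] True bU unfolding U_def D_def by blast
        have "(b, u) \<in> ET'\<^sup>*" using stay_up[OF bu _ bVT sub] uU unfolding ET'_def U_def D_def by blast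
        moreover have "x \<in> W' u" using True r unfolding W'_def Sdef by auto
        ultimately show ?thesis using uU by blast
      next
        case False
        then have rU: "r \<in> U" using r U_def by blast
        have "(b, r) \<in> ET'\<^sup>*" using stay_up[OF r(2) _ bVT sub] rU unfolding ET'_def U_def D_def by blast
        moreover have "x \<in> W' r" using r unfolding W'_def by auto
        ultimately show ?thesis using rU by blast
      qed
    qed
  qed
  have dtd': "dir_tree_decomp V E U ET' X W'"
    unfolding dir_tree_decomp_def
  proof (intro conjI)
    show "out_tree U ET'" using ot' .
    show "\<forall>e\<in>ET'. X e \<subseteq> V" using Wp(4) unfolding ET'_def by blast
    show "\<forall>r\<in>U. W' r \<noteq> {} \<and> W' r \<subseteq> V" using Wp(1) SV unfolding W'_def U_def by auto
    show "\<forall>r\<in>U. \<forall>s\<in>U. r \<noteq> s \<longrightarrow> W' r \<inter> W' s = {}"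
    proof (intro ballI impI)
      fix r s assume rs: "r \<in> U" "s \<in> U" "r \<noteq> s"
      have dj: "S \<inter> W t = {}" if tU: "t \<in> U" for t
      proof -
        have "W q \<inter> W t = {}" if q: "q \<in> D" for q
        proof -
          have "q \<in> VT" "t \<in> VT" "q \<noteq> t" using q tU unfolding U_def D_def by auto
          then show ?thesis using Wp(2) by blast
        qed
        then show ?thesis unfolding Sdef by blast
      qed
      have rV: "r \<in> VT" "s \<in> VT" using rs U_def by auto
      have "W r \<inter> W s = {}" using Wp(2) rV rs(3) by blast
      then show "W' r \<inter> W' s = {}"
        using rs(3) dj[OF rs(1)] dj[OF rs(2)] unfolding W'_def by (cases "r = u"; cases "s = u"; auto)
    qed
    show "(\<Union>r\<in>U. W' r) = V"
    proof
      show "(\<Union>r\<in>U. W' r) \<subseteq> V" using Wp(1) SV unfolding W'_def U_def by auto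
      show "V \<subseteq> (\<Union>r\<in>U. W' r)"
      proof
        fix x assume "x \<in> V"
        then obtain r where r: "r \<in> VT" "x \<in> W r" using Wp(3) by blast
        show "x \<in> (\<Union>r\<in>U. W' r)"
        proof (cases "r \<in> D")
          case True
          then have "x \<in> W' u" using r unfolding W'_def Sdef by auto
          then show ?thesis using uU by blast
        next
          case False
          then have "r \<in> U" using r U_def by blast
          moreover have "x \<in> W' r" using r unfolding W'_def by auto
          ultimately show ?thesis by blast
        qed
      qed
    qed
    show "\<forall>(a, b)\<in>ET'. z_normal V E (X (a, b)) (\<Union>{W' r | r. r \<in> U \<and> (b, r) \<in> ET'\<^sup>*})"
    proof (intro ballI, clarify)
      fix a b assume ab: "(a, b) \<in> ET'"
      then have "(a, b) \<in> ET" unfolding ET'_def by blast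
      then show "z_normal V E (X (a, b)) (\<Union>{W' r | r. r \<in> U \<and> (b, r) \<in> ET'\<^sup>*})"
        using Seq[OF ab] nrm by auto
    qed
  qed
  have card: "card U < card VT"
  proof (rule psubset_card_mono[OF fVT])
    show "U \<subset> VT" using vD U_def vV by blast
  qed
  have wd: "dtd_width U ET' X W' \<le> dtd_width VT ET X W"
  proof (rule width_mono[OF fVT])
    show "finite U" using fVT U_def by blast
    show "U \<noteq> {}" using uU by blast
    show "\<forall>r'\<in>U. \<exists>r\<in>VT. card (bag ET' X W' r') \<le> card (bag ET X W r)"
    proof
      fix r assume rU: "r \<in> U"
      then have rV: "r \<in> VT" using U_def by blast
      have U1: "\<Union>{X e | e. e \<in> ET' \<and> (fst e = r \<or> snd e = r)} \<subseteq> \<Union>{X e | e. e \<in> ET \<and> (fst e = r \<or> snd e = r)}"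
        unfolding ET'_def by blast
      have "bag ET' X W' r \<subseteq> bag ET X W r"
      proof (cases "r = u")
        case True
        have X1: "X (u, v) \<subseteq> \<Union>{X e | e. e \<in> ET \<and> (fst e = r \<or> snd e = r)}"
        proof (rule Union_upper)
          show "X (u, v) \<in> {X e | e. e \<in> ET \<and> (fst e = r \<or> snd e = r)}"
            by (rule CollectI, rule exI[of _ "(u, v)"]) (simp add: e True)
        qed
        have "S \<subseteq> X (u, v)" using SX unfolding S_def .
        then have "W' r \<subseteq> W r \<union> \<Union>{X e | e. e \<in> ET \<and> (fst e = r \<or> snd e = r)}"
          using X1 True unfolding W'_def by auto
        then show ?thesis by (rule bag_mono[OF _ ETsub])
      next
        case False
        then have "W' r = W r" unfolding W'_def by simp
        then show ?thesis using bag_mono[OF _ ETsub, of W' r W X] by simp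
      qed
      moreover have "finite (bag ET X W r)" using bag_sub[OF d rV] fin by (rule finite_subset)
      ultimately show "\<exists>r'\<in>VT. card (bag ET' X W' r) \<le> card (bag ET X W r')"
        using rV by (meson card_mono)
    qed
  qed
  show ?thesis using dtd' card wd by blast
qed

lemma contract_up:
  assumes d: "dir_tree_decomp V E VT ET X W" and e: "(u, v) \<in> ET"
    and SX: "V - \<Union>{W r | r. r \<in> VT \<and> (v, r) \<in> ET\<^sup>*} \<subseteq> X (u, v)" and fin: "finite V"
  shows "\<exists>VT' ET' W'. dir_tree_decomp V E VT' ET' X W' \<and> card VT' < card VT
           \<and> dtd_width VT' ET' X W' \<le> dtd_width VT ET X W"
proof -
  define D where "D = {r\<in>VT. (v, r) \<in> ET\<^sup>*}"
  define ET' where "ET' = ET \<inter> (D \<times> D)"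
  define S where "S = \<Union>{W r | r. r \<in> VT \<and> (v, r) \<in> ET\<^sup>*}"
  define W' where "W' = W(v := W v \<union> (V - S))"
  have ot: "out_tree VT ET" using d unfolding dir_tree_decomp_def by blast
  have sub: "ET \<subseteq> VT \<times> VT" using out_tree_sub[OF ot] .
  have uV: "u \<in> VT" and vV: "v \<in> VT" using e sub by auto
  have uD: "u \<notin> D" unfolding D_def using acyc[OF ot e] by blast
  have vD: "v \<in> D" unfolding D_def using vV by blast
  have fVT: "finite VT" using dtd_finite[OF d] .
  have ETsub: "ET' \<subseteq> ET" unfolding ET'_def by blast
  have ot': "out_tree D ET'" unfolding ET'_def D_def using down_tree[OF ot vV] .
  have Wp: "\<forall>r\<in>VT. W r \<noteq> {} \<and> W r \<subseteq> V" "\<forall>r\<in>VT. \<forall>s\<in>VT. r \<noteq> s \<longrightarrow> W r \<inter> W s = {}"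
    "(\<Union>r\<in>VT. W r) = V" "\<forall>e\<in>ET. X e \<subseteq> V"
    using d unfolding dir_tree_decomp_def by blast+
  have Sdef: "S = (\<Union>r\<in>D. W r)" unfolding S_def D_def by blast
  have nrm: "\<forall>(a, b)\<in>ET. z_normal V E (X (a, b)) (\<Union>{W r | r. r \<in> VT \<and> (b, r) \<in> ET\<^sup>*})"
    using d unfolding dir_tree_decomp_def by blast
  have Seq: "\<Union>{W' r | r. r \<in> D \<and> (b, r) \<in> ET'\<^sup>*} = \<Union>{W r | r. r \<in> VT \<and> (b, r) \<in> ET\<^sup>*}"
    if ab: "(a, b) \<in> ET'" for a b
  proof -
    have aD: "a \<in> D" and bD: "b \<in> D" using ab unfolding ET'_def by blast+
    have bv: "b \<noteq> v"
    proof
      assume "b = v"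
      then have "a = u" using uniq_parent[OF ot _ e, of a] ab unfolding ET'_def by blast
      then show False using aD uD by blast
    qed
    have vb: "(v, b) \<in> ET\<^sup>*" using bD D_def by blast
    have bVT: "b \<in> VT" using bD D_def by blast
    have rv: "r \<noteq> v" if "(b, r) \<in> ET\<^sup>*" for r
      using antisym_tree[OF ot vb] that bv by blast
    have mono': "ET'\<^sup>* \<subseteq> ET\<^sup>*" unfolding ET'_def by (simp add: rtrancl_mono)
    have eqv: "r \<in> D \<and> (b, r) \<in> ET'\<^sup>* \<longleftrightarrow> r \<in> VT \<and> (b, r) \<in> ET\<^sup>*" for r
    proof
      assume "r \<in> D \<and> (b, r) \<in> ET'\<^sup>*" then show "r \<in> VT \<and> (b, r) \<in> ET\<^sup>*" using mono' D_def by blast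
    next
      assume r: "r \<in> VT \<and> (b, r) \<in> ET\<^sup>*"
      show "r \<in> D \<and> (b, r) \<in> ET'\<^sup>*" using stay_down[of b r ET v VT] r vb bVT sub
        unfolding D_def ET'_def by blast
    qed
    have "{W' r | r. r \<in> D \<and> (b, r) \<in> ET'\<^sup>*} = {W r | r. r \<in> VT \<and> (b, r) \<in> ET\<^sup>*}"
    proof -
      have "{W' r | r. r \<in> D \<and> (b, r) \<in> ET'\<^sup>*} = {W' r | r. r \<in> VT \<and> (b, r) \<in> ET\<^sup>*}"
        using eqv by blast
      also have "\<dots> = {W r | r. r \<in> VT \<and> (b, r) \<in> ET\<^sup>*}"
        using rv unfolding W'_def by force
      finally show ?thesis .
    qed
    then show ?thesis by simp
  qed
  have dtd': "dir_tree_decomp V E D ET' X W'"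
    unfolding dir_tree_decomp_def
  proof (intro conjI)
    show "out_tree D ET'" using ot' .
    show "\<forall>e\<in>ET'. X e \<subseteq> V" using Wp(4) unfolding ET'_def by blast
    show "\<forall>r\<in>D. W' r \<noteq> {} \<and> W' r \<subseteq> V" using Wp(1) unfolding W'_def D_def by auto
    show "\<forall>r\<in>D. \<forall>s\<in>D. r \<noteq> s \<longrightarrow> W' r \<inter> W' s = {}"
    proof (intro ballI impI)
      fix r s assume rs: "r \<in> D" "s \<in> D" "r \<noteq> s"
      have dj: "\<And>t. t \<in> D \<Longrightarrow> (V - S) \<inter> W t = {}"
        unfolding Sdef by blast
      have rV: "r \<in> VT" "s \<in> VT" using rs D_def by auto
      have "W r \<inter> W s = {}" using Wp(2) rV rs(3) by blast
      then show "W' r \<inter> W' s = {}"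
        using rs(3) dj[OF rs(1)] dj[OF rs(2)] unfolding W'_def by (cases "r = v"; cases "s = v"; auto)
    qed
    show "(\<Union>r\<in>D. W' r) = V"
    proof
      show "(\<Union>r\<in>D. W' r) \<subseteq> V" using Wp(1) unfolding W'_def D_def by auto
      show "V \<subseteq> (\<Union>r\<in>D. W' r)"
      proof
        fix x assume xV: "x \<in> V"
        show "x \<in> (\<Union>r\<in>D. W' r)"
        proof (cases "x \<in> S")
          case True
          then obtain r where r: "r \<in> D" "x \<in> W r" unfolding Sdef by blast
          then have "x \<in> W' r" unfolding W'_def by auto
          then show ?thesis using r by blast
        next
          case False
          then have "x \<in> W' v" using xV unfolding W'_def by auto
          then show ?thesis using vD by blast
        qed
      qed
    qed
    show "\<forall>(a, b)\<in>ET'. z_normal V E (X (a, b)) (\<Union>{W' r | r. r \<in> D \<and> (b, r) \<in> ET'\<^sup>*})"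
    proof (intro ballI, clarify)
      fix a b assume ab: "(a, b) \<in> ET'"
      then have "(a, b) \<in> ET" unfolding ET'_def by blast
      then show "z_normal V E (X (a, b)) (\<Union>{W' r | r. r \<in> D \<and> (b, r) \<in> ET'\<^sup>*})"
        using Seq[OF ab] nrm by auto
    qed
  qed
  have card: "card D < card VT"
  proof (rule psubset_card_mono[OF fVT])
    show "D \<subset> VT" using uD D_def uV by blast
  qed
  have wd: "dtd_width D ET' X W' \<le> dtd_width VT ET X W"
  proof (rule width_mono[OF fVT])
    show "finite D" using fVT D_def by simp
    show "D \<noteq> {}" using vD by blast
    show "\<forall>r'\<in>D. \<exists>r\<in>VT. card (bag ET' X W' r') \<le> card (bag ET X W r)"
    proof
      fix r assume rD: "r \<in> D"
      then have rV: "r \<in> VT" using D_def by blast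
      have U1: "\<Union>{X e | e. e \<in> ET' \<and> (fst e = r \<or> snd e = r)} \<subseteq> \<Union>{X e | e. e \<in> ET \<and> (fst e = r \<or> snd e = r)}"
        unfolding ET'_def by blast
      have "bag ET' X W' r \<subseteq> bag ET X W r"
      proof (cases "r = v")
        case True
        have X1: "X (u, v) \<subseteq> \<Union>{X e | e. e \<in> ET \<and> (fst e = r \<or> snd e = r)}"
        proof (rule Union_upper)
          show "X (u, v) \<in> {X e | e. e \<in> ET \<and> (fst e = r \<or> snd e = r)}"
            by (rule CollectI, rule exI[of _ "(u, v)"]) (simp add: e True)
        qed
        have "(V - S) \<subseteq> X (u, v)" using SX unfolding S_def .
        then have "W' r \<subseteq> W r \<union> \<Union>{X e | e. e \<in> ET \<and> (fst e = r \<or> snd e = r)}"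
          using X1 True unfolding W'_def by auto
        then show ?thesis by (rule bag_mono[OF _ ETsub])
      next
        case False
        then have "W' r = W r" unfolding W'_def by simp
        then show ?thesis using bag_mono[OF _ ETsub, of W' r W X] by simp
      qed
      moreover have "finite (bag ET X W r)" using bag_sub[OF d rV] fin by (rule finite_subset)
      ultimately show "\<exists>r'\<in>VT. card (bag ET' X W' r) \<le> card (bag ET X W r')"
        using rV by (meson card_mono)
    qed
  qed
  show ?thesis using dtd' card wd by blast
qed

lemma is_walk_cons2: "is_walk E (x # y # ws) \<longleftrightarrow> (x, y) \<in> E \<and> is_walk E (y # ws)"
proof
  assume h: "is_walk E (x # y # ws)"
  have "Suc 0 < length (x # y # ws)" by simp
  then have "((x # y # ws) ! 0, (x # y # ws) ! Suc 0) \<in> E" using h unfolding is_walk_def by blast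
  then have "(x, y) \<in> E" by simp
  moreover have "is_walk E (y # ws)" unfolding is_walk_def
  proof (intro conjI allI impI)
    fix i assume "Suc i < length (y # ws)"
    then have "Suc (Suc i) < length (x # y # ws)" by simp
    then have "((x # y # ws) ! Suc i, (x # y # ws) ! Suc (Suc i)) \<in> E" using h unfolding is_walk_def by blast
    then show "((y # ws) ! i, (y # ws) ! Suc i) \<in> E" by simp
  qed simp
  ultimately show "(x, y) \<in> E \<and> is_walk E (y # ws)" by blast
next
  assume h: "(x, y) \<in> E \<and> is_walk E (y # ws)"
  show "is_walk E (x # y # ws)" unfolding is_walk_def
  proof (intro conjI allI impI)
    fix i assume i: "Suc i < length (x # y # ws)"
    show "((x # y # ws) ! i, (x # y # ws) ! Suc i) \<in> E"
    proof (cases i)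
      case 0 then show ?thesis using h by simp
    next
      case (Suc j)
      then have "Suc j < length (y # ws)" using i by simp
      then have "((y # ws) ! j, (y # ws) ! Suc j) \<in> E" using h unfolding is_walk_def by blast
      then show ?thesis using Suc by simp
    qed
  qed simp
qed

lemma is_walk_single: "is_walk E [x]" by (simp add: is_walk_def)

lemma type0:
  assumes d: "dir_tree_decomp V E VT ET X W" and e: "(u, v) \<in> ET"
    and cov: "V1 \<union> V2 = V"
    and arcs: "{(u, v) | u v. u \<in> V1 \<and> v \<in> V2} \<union> {(v, u) | u v. u \<in> V1 \<and> v \<in> V2} \<subseteq> E"
    and n1: "\<not> V1 \<subseteq> X (u, v)" and n2: "\<not> V2 \<subseteq> X (u, v)"
  shows "\<Union>{W r | r. r \<in> VT \<and> (v, r) \<in> ET\<^sup>*} \<subseteq> X (u, v)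
       \<or> V - \<Union>{W r | r. r \<in> VT \<and> (v, r) \<in> ET\<^sup>*} \<subseteq> X (u, v)"
proof (rule ccontr)
  define S where "S = \<Union>{W r | r. r \<in> VT \<and> (v, r) \<in> ET\<^sup>*}"
  define Z where "Z = X (u, v)"
  assume "\<not> ?thesis"
  then obtain x y where x: "x \<in> S" "x \<notin> Z" and y: "y \<in> V" "y \<notin> S" "y \<notin> Z"
    unfolding S_def Z_def by blast
  have SV: "S \<subseteq> V" using d unfolding S_def dir_tree_decomp_def by blast
  obtain a where a: "a \<in> V1" "a \<notin> Z" using n1 Z_def by blast
  obtain b where b: "b \<in> V2" "b \<notin> Z" using n2 Z_def by blast
  have a12: "\<And>p q. p \<in> V1 \<Longrightarrow> q \<in> V2 \<Longrightarrow> (p, q) \<in> E \<and> (q, p) \<in> E" using arcs by blast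
  have aV: "a \<in> V" "b \<in> V" using a b cov by auto
  have xV: "x \<in> V" using x SV by blast
  have nrm: "z_normal V E Z S" using d e unfolding dir_tree_decomp_def S_def Z_def by blast
  obtain ws where ws: "is_walk E ws" "set ws \<subseteq> V - Z" "hd ws = x" "last ws = x" "y \<in> set ws"
  proof (cases "x \<in> V1")
    case xa: True
    show ?thesis
    proof (cases "y \<in> V1")
      case True
      show ?thesis using that[of "[x, b, y, b, x]"] a12 xa True b x y xV aV
        by (simp add: is_walk_cons2 is_walk_single)
    next
      case False
      then have "y \<in> V2" using y cov by blast
      then show ?thesis using that[of "[x, y, x]"] a12 xa x y xV
        by (simp add: is_walk_cons2 is_walk_single)
    qed
  next
    case xb: False
    then have xb: "x \<in> V2" using xV cov by blast
    show ?thesis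
    proof (cases "y \<in> V1")
      case True
      then show ?thesis using that[of "[x, y, x]"] a12 xb x y xV
        by (simp add: is_walk_cons2 is_walk_single)
    next
      case False
      then have "y \<in> V2" using y cov by blast
      then show ?thesis using that[of "[x, a, y, a, x]"] a12 xb a x y xV aV
        by (simp add: is_walk_cons2 is_walk_single)
    qed
  qed
  then have "\<exists>ws. is_walk E ws \<and> set ws \<subseteq> V - Z \<and> hd ws \<in> S \<and> last ws \<in> S \<and> (\<exists>w\<in>set ws. w \<notin> S)"
    using x(1) y(2) by metis
  with nrm show False unfolding z_normal_def by (rule notE)
qed

lemma main_ind:
  assumes dg: "digraph V E" and ne: "V \<noteq> {}" and cov: "V1 \<union> V2 = V"
    and arcs: "{(u, v) | u v. u \<in> V1 \<and> v \<in> V2} \<union> {(v, u) | u v. u \<in> V1 \<and> v \<in> V2} \<subseteq> E"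
  shows "dir_tree_decomp V E VT ET X W \<Longrightarrow> dtd_width VT ET X W \<le> k \<Longrightarrow>
    \<exists>VT ET X W. dir_tree_decomp V E VT ET X W \<and> dtd_width VT ET X W \<le> k
           \<and> ((\<forall>e\<in>ET. V1 \<subseteq> X e) \<or> (\<forall>e\<in>ET. V2 \<subseteq> X e))"
proof (induction "card VT" arbitrary: VT ET W rule: less_induct)
  case (less VT ET W)
  have fin: "finite V" using dg digraph_def by blast
  show ?case
  proof (cases "\<exists>e\<in>ET. \<not> V1 \<subseteq> X e \<and> \<not> V2 \<subseteq> X e")
    case True
    then obtain u v where e: "(u, v) \<in> ET" "\<not> V1 \<subseteq> X (u, v)" "\<not> V2 \<subseteq> X (u, v)" by auto
    from type0[OF less.prems(1) e(1) cov arcs e(2,3)]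
    have "\<exists>VT' ET' W'. dir_tree_decomp V E VT' ET' X W' \<and> card VT' < card VT
           \<and> dtd_width VT' ET' X W' \<le> dtd_width VT ET X W"
      using contract_down[OF less.prems(1) e(1) _ fin] contract_up[OF less.prems(1) e(1) _ fin] by blast
    then obtain VT' ET' W' where n: "dir_tree_decomp V E VT' ET' X W'" "card VT' < card VT"
      "dtd_width VT' ET' X W' \<le> dtd_width VT ET X W" by blast
    have "dtd_width VT' ET' X W' \<le> k" using n(3) less.prems(2) by linarith
    then show ?thesis using less.hyps[OF n(2) n(1)] by blast
  next
    case nt: False
    show ?thesis
    proof (cases "\<exists>r\<in>VT. V \<subseteq> bag ET X W r")
      case True
      then obtain r where r: "r \<in> VT" "V \<subseteq> bag ET X W r" by blast
      have "card V - 1 \<le> k" using width_ge[OF less.prems(1) r fin] less.prems(2) by linarith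
      then show ?thesis using trivial_dtd[OF dg ne] by fastforce
    next
      case False
      have ot: "out_tree VT ET" using less.prems(1) unfolding dir_tree_decomp_def by blast
      have sub: "ET \<subseteq> VT \<times> VT" using out_tree_sub[OF ot] .
      have "(\<forall>e\<in>ET. V1 \<subseteq> X e) \<or> (\<forall>e\<in>ET. V2 \<subseteq> X e)"
      proof (rule path_arg[OF ot])
        show "\<forall>e\<in>ET. V1 \<subseteq> X e \<or> V2 \<subseteq> X e" using nt by blast
        show "\<forall>r g h. g \<in> ET \<longrightarrow> h \<in> ET \<longrightarrow> (fst g = r \<or> snd g = r) \<longrightarrow> (fst h = r \<or> snd h = r)
               \<longrightarrow> \<not> (V1 \<subseteq> X g \<and> V2 \<subseteq> X h)"
        proof (intro allI impI notI)
          fix r g h assume g: "g \<in> ET" and h: "h \<in> ET" and gi: "fst g = r \<or> snd g = r"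
            and hi: "fst h = r \<or> snd h = r" and c: "V1 \<subseteq> X g \<and> V2 \<subseteq> X h"
          have rV: "r \<in> VT" using g gi sub by (cases g) auto
          have "X g \<subseteq> bag ET X W r" "X h \<subseteq> bag ET X W r" unfolding bag_def using g h gi hi by blast+
          then have "V \<subseteq> bag ET X W r" using c cov by blast
          then show False using False rV by blast
        qed
      qed
      then show ?thesis using less.prems by blast
    qed
  qed
qed

theorem lemma4p9:
  fixes V :: "'a set" and E :: "('a \<times> 'a) set" and V1 V2 :: "'a set" and k :: nat
  assumes "digraph V E" and "V \<noteq> {}"
    and "directed_tree_width V E \<le> k"
    and "V1 \<union> V2 = V" and "V1 \<inter> V2 = {}"
    and "{(u, v) | u v. u \<in> V1 \<and> v \<in> V2} \<union> {(v, u) | u v. u \<in> V1 \<and> v \<in> V2} \<subseteq> E"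
  shows "\<exists>VT ET X W. dir_tree_decomp V E VT ET X W \<and> dtd_width VT ET X W \<le> k
           \<and> ((\<forall>e\<in>ET. V1 \<subseteq> X e) \<or> (\<forall>e\<in>ET. V2 \<subseteq> X e))"
proof -
  let ?P = "\<lambda>w. \<exists>VT ET X W. dir_tree_decomp V E VT ET X W \<and> dtd_width VT ET X W = w"
  have "?P (card V - 1)" using trivial_dtd[OF assms(1,2)] by blast
  then have "?P (LEAST w. ?P w)" by (rule LeastI)
  then obtain VT ET X W where d: "dir_tree_decomp V E VT ET X W"
    "dtd_width VT ET X W = directed_tree_width V E"
    unfolding directed_tree_width_def by blast
  show ?thesis using main_ind[OF assms(1,2,4,6) d(1)] d(2) assms(3) by simp
qed

end
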